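(* Let $G$ be a finite, connected, simple, bridgeless, triangle-free cubic graph, let $\Lambda$ be a valid labeling of $\mathfrak{L}_2(G)$, and let $\gamma_1,\gamma_2\in\Gamma_\Lambda$ be non-adjacent cycles. Then there are finitely many reduced cliques $\mathbb{X}_1,\dots,\mathbb{X}_n\in\mathcal{X}$ such that, with $\Lambda'=(\mathcal{F}_{\mathbb{X}_1}\circ\cdots\circ\mathcal{F}_{\mathbb{X}_n})(\Lambda)$, we have $\gamma_1,\gamma_2\in\Gamma_{\Lambda'}$ and there is a cycle $\gamma_3\in\Gamma_{\Lambda'}$ adjacent to both $\gamma_1$ and $\gamma_2$.
   Context: $\mathcal{L}(H)$ is the line graph of $H$. Let $\mathcal{T}$ be the set of triangles of $\mathcal{L}(\mathcal{L}(G))$ formed by the three edges of a triangle of $\mathcal{L}(G)$. $\mathfrak{L}_2(G)$ has the vertex set of $\mathcal{L}(\mathcal{L}(G))$ and the edges of $\mathcal{L}(\mathcal{L}(G))$ not in any triangle of $\mathcal{T}$. For each edge $e$ of $G$, the reduced clique $\mathbb{X}_e$ is the subgraph of $\mathfrak{L}_2(G)$ on the four edges of $\mathcal{L}(G)$ incident to $e$, with all edges of $\mathfrak{L}_2(G)$ among them (a 4-cycle); $\mathcal{X}$ is the set of reduced cliques. A labeling $\Lambda$ gives each edge of $\mathfrak{L}_2(G)$ a label in $\{0,1\}$ ($1$ = open); it is valid if in every reduced clique each vertex is incident to two edges of that clique with different labels. $\Gamma_\Lambda$ is the set of connected components (cycles, viewed as subgraphs) of the subgraph formed by open edges. Two cycles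 $\gamma,\phi\in\Gamma_\Lambda$ are adjacent if some reduced clique contains an edge of $\gamma$ and an edge of $\phi$. The label inversion $\mathcal{F}_{\mathbb{X}}(\Lambda)$ is obtained from $\Lambda$ by replacing $\lambda_f$ with $1-\lambda_f$ for each edge $f$ of $\mathbb{X}$, other labels unchanged; it is again a valid labeling. *)

theory Defs
  imports Main
begin

definition simple_graph :: "'a set \<Rightarrow> 'a set set \<Rightarrow> bool" where
  "simple_graph V E \<longleftrightarrow> (\<forall>e\<in>E. \<exists>u v. u \<noteq> v \<and> u \<in> V \<and> v \<in> V \<and> e = {u, v})"

definition reachable :: "'a set set \<Rightarrow> 'a \<Rightarrow> 'a \<Rightarrow> bool" where
  "reachable E u v \<longleftrightarrow> (\<lambda>x y. {x, y} \<in> E)\<^sup>*\<^sup>* u v"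

definition connected_graph :: "'a set \<Rightarrow> 'a set set \<Rightarrow> bool" where
  "connected_graph V E \<longleftrightarrow> (\<forall>u\<in>V. \<forall>v\<in>V. reachable E u v)"

definition bridgeless :: "'a set \<Rightarrow> 'a set set \<Rightarrow> bool" where
  "bridgeless V E \<longleftrightarrow> (\<forall>e\<in>E. connected_graph V (E - {e}))"

definition triangle_free :: "'a set set \<Rightarrow> bool" where
  "triangle_free E \<longleftrightarrow>
     \<not> (\<exists>u v w. u \<noteq> v \<and> v \<noteq> w \<and> u \<noteq> w \<and> {u, v} \<in> E \<and> {v, w} \<in> E \<and> {u, w} \<in> E)"

definition cubic :: "'a set \<Rightarrow> 'a set set \<Rightarrow> bool" where
  "cubic V E \<longleftrightarrow> (\<forall>v\<in>V. card {e\<in>E. v \<in> e} = 3)"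

definition lg_edges :: "'b set set \<Rightarrow> 'b set set set" where
  "lg_edges F = {{e, f} | e f. e \<in> F \<and> f \<in> F \<and> e \<noteq> f \<and> e \<inter> f \<noteq> {}}"

definition triangles :: "'b set set \<Rightarrow> 'b set set" where
  "triangles F = {{x, y, z} | x y z. x \<noteq> y \<and> y \<noteq> z \<and> x \<noteq> z \<and>
                     {x, y} \<in> F \<and> {y, z} \<in> F \<and> {x, z} \<in> F}"

text \<open>The set T: triangles of L(L(G)) formed by the three edges of a triangle of L(G).\<close>
definition calT :: "'a set set \<Rightarrow> 'a set set set set" where
  "calT E = (\<lambda>t. {\<epsilon> \<in> lg_edges E. \<epsilon> \<subseteq> t}) ` triangles (lg_edges E)"

text \<open>L_2(G): vertex set lg_edges E (vertices of L(L(G))), edges of L(L(G))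
  not contained in any triangle of T.\<close>
definition L2_edges :: "'a set set \<Rightarrow> 'a set set set set" where
  "L2_edges E = {\<epsilon> \<in> lg_edges (lg_edges E). \<not> (\<exists>\<tau>\<in>calT E. \<epsilon> \<subseteq> \<tau>)}"

definition rc_verts :: "'a set set \<Rightarrow> 'a set \<Rightarrow> 'a set set set" where
  "rc_verts E e = {p \<in> lg_edges E. e \<in> p}"

definition rc_edges :: "'a set set \<Rightarrow> 'a set \<Rightarrow> 'a set set set set" where
  "rc_edges E e = {\<epsilon> \<in> L2_edges E. \<epsilon> \<subseteq> rc_verts E e}"

definition reduced_cliques :: "'a set set \<Rightarrow> ('a set set set \<times> 'a set set set set) set" where
  "reduced_cliques E = (\<lambda>e. (rc_verts E e, rc_edges E e)) ` E"

type_synonym 'a labeling = "'a set set set \<Rightarrow> nat"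

definition valid_labeling :: "'a set set \<Rightarrow> 'a labeling \<Rightarrow> bool" where
  "valid_labeling E \<Lambda> \<longleftrightarrow>
     (\<forall>f\<in>L2_edges E. \<Lambda> f \<in> {0, 1}) \<and>
     (\<forall>X\<in>reduced_cliques E. \<forall>p\<in>fst X.
        \<exists>f\<in>snd X. \<exists>g\<in>snd X. p \<in> f \<and> p \<in> g \<and> \<Lambda> f \<noteq> \<Lambda> g)"

definition open_edges :: "'a set set \<Rightarrow> 'a labeling \<Rightarrow> 'a set set set set" where
  "open_edges E \<Lambda> = {f \<in> L2_edges E. \<Lambda> f = 1}"

text \<open>Gamma_Lambda: connected components (as subgraphs: vertex set, edge set) of the
  subgraph formed by the open edges.\<close>
definition cycles :: "'a set set \<Rightarrow> 'a labeling \<Rightarrow> ('a set set set \<times> 'a set set set set) set" where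
  "cycles E \<Lambda> =
     {(C, {f \<in> open_edges E \<Lambda>. f \<subseteq> C}) | C.
        \<exists>p\<in>\<Union>(open_edges E \<Lambda>). C = {q. (\<lambda>x y. {x, y} \<in> open_edges E \<Lambda>)\<^sup>*\<^sup>* p q}}"

definition adjacent_cycles :: "'a set set \<Rightarrow> ('a set set set \<times> 'a set set set set)
    \<Rightarrow> ('a set set set \<times> 'a set set set set) \<Rightarrow> bool" where
  "adjacent_cycles E \<gamma> \<phi> \<longleftrightarrow> \<gamma> \<noteq> \<phi> \<and>
     (\<exists>X\<in>reduced_cliques E. \<exists>f\<in>snd \<gamma>. \<exists>g\<in>snd \<phi>. f \<in> snd X \<and> g \<in> snd X)"

definition label_inversion :: "('a set set set \<times> 'a set set set set) \<Rightarrow> 'a labeling \<Rightarrow> 'a labeling" where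
  "label_inversion X \<Lambda> = (\<lambda>f. if f \<in> snd X then 1 - \<Lambda> f else \<Lambda> f)"

end

theory Submission
  imports Defs
begin


lemma lg_pair_int:
  assumes "{u,v} \<in> lg_edges F" shows "u \<inter> v \<noteq> {}"
proof -
  obtain e f where ef: "{u,v} = {e,f}" "e \<inter> f \<noteq> {}" using assms unfolding lg_edges_def by blast
  from ef(1) have "(u = e \<and> v = f) \<or> (u = f \<and> v = e)" by (simp only: doubleton_eq_iff)
  then show ?thesis using ef(2) by (metis Int_commute)
qed

lemma lg_pair_mem: "u \<in> F \<Longrightarrow> v \<in> F \<Longrightarrow> u \<noteq> v \<Longrightarrow> u \<inter> v \<noteq> {} \<Longrightarrow> {u,v} \<in> lg_edges F"
  by (auto simp: lg_edges_def)

lemma lg_pair: "x \<in> lg_edges F \<Longrightarrow> \<exists>u v. x = {u,v} \<and> u \<in> F \<and> v \<in> F \<and> u \<noteq> v"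
  by (auto simp: lg_edges_def)

lemma L2_lg: "f \<in> L2_edges E \<Longrightarrow> f \<in> lg_edges (lg_edges E)"
  by (simp add: L2_edges_def)

lemma rc_L2: "f \<in> rc_edges E d \<Longrightarrow> f \<in> L2_edges E"
  by (simp add: rc_edges_def)

lemma rc_unique:
  assumes "f \<in> rc_edges E d" "f \<in> rc_edges E d'" shows "d = d'"
proof (rule ccontr)
  assume ne: "d \<noteq> d'"
  from assms(1) have "f \<in> lg_edges (lg_edges E)" by (intro L2_lg rc_L2)
  then obtain p q where f: "f = {p,q}" "p \<in> lg_edges E" "q \<in> lg_edges E" "p \<noteq> q"
    using lg_pair[OF \<open>f \<in> lg_edges (lg_edges E)\<close>] by blast
  have s1: "f \<subseteq> rc_verts E d" "f \<subseteq> rc_verts E d'" using assms unfolding rc_edges_def by blast+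
  have "p \<in> rc_verts E d" "q \<in> rc_verts E d" "p \<in> rc_verts E d'" "q \<in> rc_verts E d'"
    using s1 f(1) by auto
  then have dp: "d \<in> p" "d' \<in> p" "d \<in> q" "d' \<in> q"
    by (simp_all add: rc_verts_def)
  obtain p1 p2 where p: "p = {p1,p2}" using lg_pair[OF f(2)] by blast
  obtain q1 q2 where q: "q = {q1,q2}" using lg_pair[OF f(3)] by blast
  have "p = {d,d'}" using p dp(1,2) ne by auto
  moreover have "q = {d,d'}" using q dp(3,4) ne by auto
  ultimately show False using f(4) by (simp only:)
qed

lemma valid_open:
  assumes "valid_labeling E \<Lambda>" "e \<in> E" "q \<in> rc_verts E e"
  shows "\<exists>g\<in>rc_edges E e. q \<in> g \<and> \<Lambda> g = 1"
proof -
  have X: "(rc_verts E e, rc_edges E e) \<in> reduced_cliques E"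
    using assms(2) by (auto simp: reduced_cliques_def)
  then obtain f g where fg: "f \<in> rc_edges E e" "g \<in> rc_edges E e" "q \<in> f" "q \<in> g" "\<Lambda> f \<noteq> \<Lambda> g"
    using assms(1,3) unfolding valid_labeling_def by fastforce
  have "\<Lambda> f \<in> {0,1}" "\<Lambda> g \<in> {0,1}"
    using assms(1) fg(1,2) rc_L2 unfolding valid_labeling_def by blast+
  then have "\<Lambda> f = 1 \<or> \<Lambda> g = 1" using fg(5) by auto
  then show ?thesis using fg(1-4) by blast
qed

lemma open_pair:
  assumes "g \<in> open_edges E \<Lambda>" "q \<in> g" shows "\<exists>q'. g = {q,q'}"
proof -
  have gl: "g \<in> lg_edges (lg_edges E)" using assms(1) L2_lg unfolding open_edges_def by blast
  obtain u v where "g = {u,v}" using lg_pair[OF gl] by blast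
  then show ?thesis using assms(2) by (metis insertE insert_commute singletonD)
qed

lemma cyclesE:
  assumes "\<gamma> \<in> cycles E \<Lambda>"
  obtains C p where "\<gamma> = (C, {f\<in>open_edges E \<Lambda>. f \<subseteq> C})" "p \<in> \<Union>(open_edges E \<Lambda>)"
    "C = {q. (\<lambda>x y. {x, y} \<in> open_edges E \<Lambda>)\<^sup>*\<^sup>* p q}"
  using assms unfolding cycles_def by blast

lemma touch:
  assumes "\<gamma> \<in> cycles E \<Lambda>" "valid_labeling E \<Lambda>" "e \<in> E" "q \<in> fst \<gamma>" "q \<in> rc_verts E e"
  shows "\<exists>g\<in>snd \<gamma>. g \<in> rc_edges E e"
proof -
  obtain C p where c: "\<gamma> = (C, {f\<in>open_edges E \<Lambda>. f \<subseteq> C})" "p \<in> \<Union>(open_edges E \<Lambda>)"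
    "C = {q. (\<lambda>x y. {x, y} \<in> open_edges E \<Lambda>)\<^sup>*\<^sup>* p q}" using cyclesE[OF assms(1)] by blast
  obtain g where g: "g \<in> rc_edges E e" "q \<in> g" "\<Lambda> g = 1" using valid_open[OF assms(2,3,5)] by blast
  have go: "g \<in> open_edges E \<Lambda>" using g rc_L2 by (auto simp: open_edges_def)
  then obtain q' where q': "g = {q,q'}" using open_pair[OF go g(2)] by blast
  have "q \<in> C" using assms(4) c(1) by simp
  then have "q' \<in> C" using c(3) go q' by (auto intro: rtranclp.rtrancl_into_rtrancl)
  then have "g \<subseteq> C" using \<open>q \<in> C\<close> q' by auto
  then show ?thesis using c(1) go g(1) by auto
qed

lemma invariance:
  assumes "\<gamma> \<in> cycles E \<Lambda>"
    and H: "\<forall>f\<in>L2_edges E. f \<inter> fst \<gamma> \<noteq> {} \<longrightarrow> \<Lambda>' f = \<Lambda> f"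
  shows "\<gamma> \<in> cycles E \<Lambda>'"
proof -
  obtain C p where c: "\<gamma> = (C, {f\<in>open_edges E \<Lambda>. f \<subseteq> C})" "p \<in> \<Union>(open_edges E \<Lambda>)"
    "C = {q. (\<lambda>x y. {x, y} \<in> open_edges E \<Lambda>)\<^sup>*\<^sup>* p q}" using cyclesE[OF assms(1)] by blast
  let ?R = "\<lambda>x y. {x, y} \<in> open_edges E \<Lambda>"
  let ?R' = "\<lambda>x y. {x, y} \<in> open_edges E \<Lambda>'"
  have H': "\<And>f. f \<in> L2_edges E \<Longrightarrow> x \<in> f \<Longrightarrow> x \<in> C \<Longrightarrow> \<Lambda>' f = \<Lambda> f" for x
    using H c(1) by auto
  have 1: "?R\<^sup>*\<^sup>* p q" if "?R'\<^sup>*\<^sup>* p q" for q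
    using that
  proof (induction rule: rtranclp_induct)
    case base then show ?case by simp
  next
    case (step y z)
    then have "y \<in> C" using c(3) by simp
    then have "?R y z" using step(2) H'[of "{y,z}" y] by (auto simp: open_edges_def)
    then show ?case by (rule rtranclp.rtrancl_into_rtrancl[OF step(3)])
  qed
  have 2: "?R'\<^sup>*\<^sup>* p q" if "?R\<^sup>*\<^sup>* p q" for q
    using that
  proof (induction rule: rtranclp_induct)
    case base then show ?case by simp
  next
    case (step y z)
    then have "y \<in> C" using c(3) by simp
    then have "?R' y z" using step(2) H'[of "{y,z}" y] by (auto simp: open_edges_def)
    then show ?case by (rule rtranclp.rtrancl_into_rtrancl[OF step(3)])
  qed
  have CC: "C = {q. ?R'\<^sup>*\<^sup>* p q}" using 1 2 c(3) by blast
  have pC: "p \<in> C" using c(3) by simp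
  have "{f\<in>open_edges E \<Lambda>'. f \<subseteq> C} = {f\<in>open_edges E \<Lambda>. f \<subseteq> C}"
  proof -
    have "\<Lambda>' f = \<Lambda> f" if fa: "f \<in> L2_edges E" "f \<subseteq> C" for f
    proof -
      obtain u v where "f = {u,v}" using lg_pair[OF L2_lg[OF fa(1)]] by blast
      then show ?thesis using H'[OF fa(1), of u] fa by auto
    qed
    then show ?thesis by (auto simp: open_edges_def)
  qed
  moreover have "p \<in> \<Union>(open_edges E \<Lambda>')"
  proof -
    obtain f where f: "f \<in> open_edges E \<Lambda>" "p \<in> f" using c(2) by blast
    then have "\<Lambda>' f = \<Lambda> f" using H'[of f p] pC by (auto simp: open_edges_def)
    then show ?thesis using f by (auto simp: open_edges_def)
  qed
  ultimately show ?thesis using c(1) CC unfolding cycles_def by blast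
qed



lemma flips:
  assumes L01: "\<forall>f\<in>L2_edges E. \<Lambda> f \<in> {0,1}"
  shows "\<forall>(t,d)\<in>set T. t \<in> rc_edges E d \<and> d \<in> E \<Longrightarrow> distinct (map snd T) \<Longrightarrow>
    \<exists>Xs. set Xs \<subseteq> reduced_cliques E \<and>
      (\<forall>f. (\<forall>d\<in>snd ` set T. f \<notin> rc_edges E d) \<longrightarrow> foldr label_inversion Xs \<Lambda> f = \<Lambda> f) \<and>
      (\<forall>(t,d)\<in>set T. foldr label_inversion Xs \<Lambda> t = 1) \<and>
      (\<forall>f\<in>L2_edges E. foldr label_inversion Xs \<Lambda> f \<in> {0,1})"
proof (induction T)
  case Nil
  show ?case using L01 by (intro exI[of _ "[]"]) auto
next
  case (Cons td T)
  obtain t d where td: "td = (t,d)" by (cases td)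
  from Cons.prems td have tin: "t \<in> rc_edges E d" "d \<in> E" by auto
  from Cons.prems td have dT: "d \<notin> snd ` set T" by auto
  from Cons obtain Xs where X: "set Xs \<subseteq> reduced_cliques E"
      "\<forall>f. (\<forall>d\<in>snd ` set T. f \<notin> rc_edges E d) \<longrightarrow> foldr label_inversion Xs \<Lambda> f = \<Lambda> f"
      "\<forall>(t,d)\<in>set T. foldr label_inversion Xs \<Lambda> t = 1"
      "\<forall>f\<in>L2_edges E. foldr label_inversion Xs \<Lambda> f \<in> {0,1}" by auto
  let ?L = "foldr label_inversion Xs \<Lambda>"
  show ?case
  proof (cases "?L t = 1")
    case True
    then show ?thesis using X td by (intro exI[of _ Xs]) auto
  next
    case False
    have Lt: "?L t = 0" using False X(4) rc_L2[OF tin(1)] by auto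
    let ?X = "(rc_verts E d, rc_edges E d)"
    have XX: "?X \<in> reduced_cliques E" using tin(2) by (auto simp: reduced_cliques_def)
    have f: "foldr label_inversion (?X # Xs) \<Lambda> = (\<lambda>f. if f \<in> rc_edges E d then 1 - ?L f else ?L f)"
      by (simp add: label_inversion_def)
    have oth: "t' \<notin> rc_edges E d" if "(t',d') \<in> set T" for t' d'
    proof
      assume "t' \<in> rc_edges E d"
      moreover have "t' \<in> rc_edges E d'" using that Cons.prems by auto
      ultimately have "d = d'" by (rule rc_unique)
      then show False using dT that by force
    qed
    show ?thesis
    proof (intro exI[of _ "?X # Xs"] conjI)
      show "set (?X # Xs) \<subseteq> reduced_cliques E" using X(1) XX by auto
      show "\<forall>f. (\<forall>d\<in>snd ` set (td # T). f \<notin> rc_edges E d) \<longrightarrow> foldr label_inversion (?X # Xs) \<Lambda> f = \<Lambda> f"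
        using X(2) td by (simp only: f) auto
      show "\<forall>(t,d)\<in>set (td # T). foldr label_inversion (?X # Xs) \<Lambda> t = 1"
        using X(3) td Lt tin(1) oth by (simp only: f) auto
      show "\<forall>f\<in>L2_edges E. foldr label_inversion (?X # Xs) \<Lambda> f \<in> {0,1}"
        using X(4) by (simp only: f) auto
    qed
  qed
qed

lemma walk_reach:
  assumes "(\<lambda>x y. {x,y} \<in> E)\<^sup>*\<^sup>* u x" "e \<in> E" "u \<in> e"
  shows "\<exists>w. w \<noteq> [] \<and> hd w = e \<and> set w \<subseteq> E \<and> successively (\<lambda>a b. a \<inter> b \<noteq> {}) w \<and> x \<in> last w"
  using assms(1)
proof (induction rule: rtranclp_induct)
  case base
  then show ?case using assms by (intro exI[of _ "[e]"]) auto
next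
  case (step y z)
  then obtain w where w: "w \<noteq> []" "hd w = e" "set w \<subseteq> E" "successively (\<lambda>a b. a \<inter> b \<noteq> {}) w" "y \<in> last w"
    by blast
  show ?case using w step(2)
    by (intro exI[of _ "w @ [{y,z}]"]) (auto simp: successively_append_iff)
qed

lemma walk_exists:
  assumes "simple_graph V E" "connected_graph V E" "e \<in> E" "e' \<in> E"
  shows "\<exists>w. w \<noteq> [] \<and> hd w = e \<and> last w = e' \<and> set w \<subseteq> E \<and> successively (\<lambda>a b. a \<inter> b \<noteq> {}) w"
proof -
  obtain u v where uv: "e = {u,v}" "u \<in> V" using assms(1,3) unfolding simple_graph_def by blast
  obtain x y where xy: "e' = {x,y}" "x \<in> V" using assms(1,4) unfolding simple_graph_def by blast
  have "(\<lambda>a b. {a,b} \<in> E)\<^sup>*\<^sup>* u x" using assms(2) uv xy unfolding connected_graph_def reachable_def by blast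
  then obtain w where w: "w \<noteq> []" "hd w = e" "set w \<subseteq> E" "successively (\<lambda>a b. a \<inter> b \<noteq> {}) w" "x \<in> last w"
    using walk_reach[of E u x e] assms(3) uv by auto
  show ?thesis using w xy assms(4)
    by (intro exI[of _ "w @ [e']"]) (auto simp: successively_append_iff)
qed

fun tg :: "'b set list \<Rightarrow> ('b set set set \<times> 'b set) list" where
  "tg (a # b # c # rest) = ({{a,b},{b,c}}, b) # tg (b # c # rest)"
| "tg _ = []"

lemma tg_snd: "map snd (tg w) = butlast (tl w)"
  by (induction w rule: tg.induct) auto

lemma tg_dec: "(t,d) \<in> set (tg w) \<Longrightarrow> \<exists>xs a c ys. w = xs @ a # d # c # ys \<and> t = {{a,d},{d,c}}"
proof (induction w rule: tg.induct)
  case (1 a b c rest)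
  show ?case
  proof (cases "(t,d) = ({{a,b},{b,c}}, b)")
    case True
    then have "t = {{a,b},{b,c}}" "d = b" by simp_all
    then show ?thesis by (intro exI[of _ "[]"] exI[of _ a] exI[of _ c] exI[of _ rest]) simp
  next
    case False
    have "(t,d) = ({{a,b},{b,c}}, b) \<or> (t,d) \<in> set (tg (b # c # rest))" using 1(2) by (simp only: tg.simps list.set insert_iff)
    then have "(t,d) \<in> set (tg (b # c # rest))" using False by blast
    then obtain xs a' c' ys where "b # c # rest = xs @ a' # d # c' # ys" "t = {{a',d},{d,c'}}"
      using 1(1) by blast
    then show ?thesis by (intro exI[of _ "a # xs"] exI[of _ a'] exI[of _ c'] exI[of _ ys]) simp
  qed
qed simp_all

lemma tg_chain:
  "\<forall>(t,d)\<in>set (tg w). t \<in> Op \<Longrightarrow> 2 \<le> length w \<Longrightarrow>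
    (\<lambda>x y. {x,y} \<in> Op)\<^sup>*\<^sup>* {hd w, hd (tl w)} {last (butlast w), last w}"
proof (induction w rule: tg.induct)
  case (1 a b c rest)
  then have "(\<lambda>x y. {x,y} \<in> Op)\<^sup>*\<^sup>* {b, c} {last (butlast (b # c # rest)), last (b # c # rest)}" by auto
  moreover have "{{a,b},{b,c}} \<in> Op" using 1(2) by auto
  ultimately show ?case by (auto intro: converse_rtranclp_into_rtranclp)
next
  case ("2_3" v va)
  then show ?case by auto
qed auto

lemma succ_mid: "successively P (xs @ a # b # ys) \<Longrightarrow> P a b"
  by (simp add: successively_append_iff)

lemma t_L2:
  assumes "a \<in> E" "d \<in> E" "c \<in> E" "a \<noteq> d" "d \<noteq> c" "a \<noteq> c" "a \<inter> d \<noteq> {}" "d \<inter> c \<noteq> {}" "a \<inter> c = {}"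
  shows "{{a,d},{d,c}} \<in> L2_edges E"
proof -
  have p: "{a,d} \<in> lg_edges E" "{d,c} \<in> lg_edges E" using assms by (auto intro: lg_pair_mem)
  have ne: "{a,d} \<noteq> {d,c}" using assms by (auto simp: doubleton_eq_iff)
  have lg: "{{a,d},{d,c}} \<in> lg_edges (lg_edges E)" using lg_pair_mem[OF p ne] by auto
  have "\<not> (\<exists>\<tau>\<in>calT E. {{a,d},{d,c}} \<subseteq> \<tau>)"
  proof
    assume "\<exists>\<tau>\<in>calT E. {{a,d},{d,c}} \<subseteq> \<tau>"
    then obtain s where s: "s \<in> triangles (lg_edges E)" "{{a,d},{d,c}} \<subseteq> {\<epsilon> \<in> lg_edges E. \<epsilon> \<subseteq> s}"
      unfolding calT_def by blast
    then have ac: "a \<in> s" "c \<in> s" by auto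
    obtain x y z where xyz: "s = {x,y,z}" "{x, y} \<in> lg_edges E" "{y, z} \<in> lg_edges E" "{x, z} \<in> lg_edges E"
      using s(1) unfolding triangles_def by blast
    have "a \<in> {x,y,z}" "c \<in> {x,y,z}" using ac xyz(1) by simp_all
    then have "{a,c} \<in> lg_edges E" using xyz(2-4) assms(6)
      by (simp only: insert_iff empty_iff) (elim disjE; simp add: insert_commute)
    then show False using lg_pair_int[of a c] assms(9) by blast
  qed
  then show ?thesis using lg unfolding L2_edges_def by blast
qed

lemma cyc_touch:
  assumes "\<gamma> \<in> cycles E \<Lambda>"
  shows "\<exists>e\<in>E. \<exists>g\<in>snd \<gamma>. g \<in> rc_edges E e"
proof -
  obtain C p where c: "\<gamma> = (C, {f\<in>open_edges E \<Lambda>. f \<subseteq> C})" "p \<in> \<Union>(open_edges E \<Lambda>)"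
    "C = {q. (\<lambda>x y. {x, y} \<in> open_edges E \<Lambda>)\<^sup>*\<^sup>* p q}" using cyclesE[OF assms(1)] by blast
  obtain f where f: "f \<in> open_edges E \<Lambda>" "p \<in> f" using c(2) by blast
  obtain q where q: "f = {p,q}" using open_pair[OF f] by blast
  have "(\<lambda>x y. {x, y} \<in> open_edges E \<Lambda>)\<^sup>*\<^sup>* p q" using f(1) q by (intro r_into_rtranclp) simp
  then have "f \<subseteq> C" using c(3) q by auto
  then have fs: "f \<in> snd \<gamma>" using c(1) f by auto
  have fL: "f \<in> L2_edges E" using f by (simp add: open_edges_def)
  then have "f \<in> lg_edges (lg_edges E)" by (rule L2_lg)
  then obtain x y where xy: "f = {x,y}" "x \<in> lg_edges E" "y \<in> lg_edges E" using lg_pair[OF \<open>f \<in> lg_edges (lg_edges E)\<close>] by blast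
  have "x \<inter> y \<noteq> {}" using \<open>f \<in> lg_edges (lg_edges E)\<close> xy lg_pair_int by blast
  then obtain e where e: "e \<in> x" "e \<in> y" by blast
  have "e \<in> E" using lg_pair[OF xy(2)] e by auto
  moreover have "f \<in> rc_edges E e" using fL xy e by (auto simp: rc_edges_def rc_verts_def)
  ultimately show ?thesis using fs by blast
qed



lemma succ_skip: "successively P (xs @ a # b # c # ys) \<Longrightarrow> P a c \<Longrightarrow> successively P (xs @ a # c # ys)"
  by (auto simp: successively_append_iff)

lemma succ_suffix: "successively P (xs @ ys) \<Longrightarrow> successively P ys"
  by (simp add: successively_append_iff)

lemma succ_prefix: "successively P (xs @ ys) \<Longrightarrow> successively P xs"
  by (simp add: successively_append_iff)

lemma adjI:
  assumes "\<gamma> \<noteq> \<phi>" "e \<in> E" "f \<in> snd \<gamma>" "f \<in> rc_edges E e" "g \<in> snd \<phi>" "g \<in> rc_edges E e"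
  shows "adjacent_cycles E \<gamma> \<phi>"
proof -
  have X: "(rc_verts E e, rc_edges E e) \<in> reduced_cliques E" using assms(2) by (auto simp: reduced_cliques_def)
  show ?thesis unfolding adjacent_cycles_def
    apply (rule conjI, rule assms(1))
    apply (rule bexI[OF _ X])
    apply (rule bexI[OF _ assms(3)])
    apply (rule bexI[OF _ assms(5)])
    using assms(4,6) by simp
qed

lemma succ_cut:
  assumes "successively P (xs @ [y] @ ys @ [y] @ zs)" shows "successively P (xs @ [y] @ zs)"
proof -
  have a: "successively P (xs @ [y])" using succ_prefix[of P "xs @ [y]" "ys @ [y] @ zs"] assms by simp
  have b: "successively P (y # zs)" using succ_suffix[of P "xs @ [y] @ ys" "y # zs"] assms by simp
  have "successively P ((xs @ [y]) @ zs)" using a b by (cases zs) (auto simp: successively_append_iff)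
  then show ?thesis by simp
qed

lemma mid_dec:
  assumes "m \<in> set (butlast (tl w))" shows "\<exists>xs ys. w = xs @ m # ys \<and> xs \<noteq> [] \<and> ys \<noteq> []"
proof (cases w)
  case Nil then show ?thesis using assms by simp
next
  case (Cons x w')
  then have m: "m \<in> set (butlast w')" using assms by simp
  then have ne: "w' \<noteq> []" by auto
  obtain p q where pq: "butlast w' = p @ m # q" using split_list[OF m] by blast
  have "w' = butlast w' @ [last w']" using ne by simp
  then have "w = (x # p) @ m # (q @ [last w'])" using Cons pq by simp
  then show ?thesis by blast
qed

lemma last_two:
  assumes "2 \<le> length w" shows "w = butlast (butlast w) @ [last (butlast w), last w]"
proof -
  have ne: "w \<noteq> []" using assms by auto
  have ne2: "butlast w \<noteq> []" using assms by (cases w) auto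
  have "w = butlast w @ [last w]" using ne by simp
  also have "butlast w = butlast (butlast w) @ [last (butlast w)]" using ne2 by simp
  finally show ?thesis by simp
qed



theorem proposition2p21:
  fixes V :: "'a set" and E :: "'a set set" and \<Lambda> :: "'a labeling"
    and \<gamma>1 \<gamma>2 :: "'a set set set \<times> 'a set set set set"
  assumes "finite V" and "simple_graph V E" and "connected_graph V E"
    and "bridgeless V E" and "triangle_free E" and "cubic V E"
    and "valid_labeling E \<Lambda>"
    and "\<gamma>1 \<in> cycles E \<Lambda>" and "\<gamma>2 \<in> cycles E \<Lambda>" and "\<gamma>1 \<noteq> \<gamma>2"
    and "\<not> adjacent_cycles E \<gamma>1 \<gamma>2"
  shows "\<exists>Xs. set Xs \<subseteq> reduced_cliques E \<and>
           (let \<Lambda>' = foldr label_inversion Xs \<Lambda> in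
              \<gamma>1 \<in> cycles E \<Lambda>' \<and> \<gamma>2 \<in> cycles E \<Lambda>' \<and>
              (\<exists>\<gamma>3\<in>cycles E \<Lambda>'. adjacent_cycles E \<gamma>3 \<gamma>1 \<and> adjacent_cycles E \<gamma>3 \<gamma>2))"
proof -
  define adj :: "'a set \<Rightarrow> 'a set \<Rightarrow> bool" where "adj = (\<lambda>a b. a \<inter> b \<noteq> {})"
  define tc where "tc \<gamma> e \<longleftrightarrow> (\<exists>g\<in>snd \<gamma>. g \<in> rc_edges E e)"
    for \<gamma> :: "'a set set set \<times> 'a set set set set" and e
  have XinR: "(rc_verts E e, rc_edges E e) \<in> reduced_cliques E" if "e \<in> E" for e
    using that by (auto simp: reduced_cliques_def)
  have nonadj: "\<not> (tc \<gamma>1 e \<and> tc \<gamma>2 e)" if eE: "e \<in> E" for e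
  proof
    assume "tc \<gamma>1 e \<and> tc \<gamma>2 e"
    then obtain g1 g2 where g: "g1 \<in> snd \<gamma>1" "g1 \<in> rc_edges E e" "g2 \<in> snd \<gamma>2" "g2 \<in> rc_edges E e"
      unfolding tc_def by blast
    have "adjacent_cycles E \<gamma>1 \<gamma>2" by (rule adjI[OF assms(10) eE g])
    then show False using assms(11) by blast
  qed
  obtain e1 where e1: "e1 \<in> E" "tc \<gamma>1 e1" using cyc_touch[OF assms(8)] unfolding tc_def by blast
  obtain e2 where e2: "e2 \<in> E" "tc \<gamma>2 e2" using cyc_touch[OF assms(9)] unfolding tc_def by blast
  obtain w0 where w0: "w0 \<noteq> []" "hd w0 = e1" "last w0 = e2" "set w0 \<subseteq> E" "successively adj w0"
    using walk_exists[OF assms(2,3) e1(1) e2(1)] unfolding adj_def by blast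
  define W where "W w \<longleftrightarrow> w \<noteq> [] \<and> set w \<subseteq> E \<and> successively adj w \<and> tc \<gamma>1 (hd w) \<and> tc \<gamma>2 (last w)"
    for w
  have "W w0" using w0 e1 e2 by (simp add: W_def)
  then obtain w where wW: "W w" and wmin: "\<forall>w'. W w' \<longrightarrow> length w \<le> length w'"
    using ex_has_least_nat[of W w0 length] by blast
  from wW have w: "w \<noteq> []" "set w \<subseteq> E" "successively adj w" "tc \<gamma>1 (hd w)" "tc \<gamma>2 (last w)"
    by (simp_all add: W_def)

  have dist: "distinct w"
  proof (rule ccontr)
    assume "\<not> distinct w"
    then obtain xs ys zs y where dec: "w = xs @ [y] @ ys @ [y] @ zs" using not_distinct_decomp by blast
    have "W (xs @ [y] @ zs)"
      unfolding W_def
    proof (intro conjI)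
      show "successively adj (xs @ [y] @ zs)" using w(3) dec succ_cut by metis
      show "tc \<gamma>1 (hd (xs @ [y] @ zs))" using w(4) dec by (cases xs) auto
      show "tc \<gamma>2 (last (xs @ [y] @ zs))" using w(5) dec by (cases zs) auto
    qed (use w(2) dec in auto)
    moreover have "length (xs @ [y] @ zs) < length w" using dec by simp
    ultimately show False using wmin by force
  qed

  have P2: "a \<inter> c = {}" if dec: "w = xs @ a # b # c # ys" for xs a b c ys
  proof (rule ccontr)
    assume ac: "a \<inter> c \<noteq> {}"
    have "W (xs @ a # c # ys)"
      unfolding W_def
    proof (intro conjI)
      show "successively adj (xs @ a # c # ys)" using w(3) dec succ_skip[of adj xs a b c ys] ac adj_def by auto
      show "tc \<gamma>1 (hd (xs @ a # c # ys))" using w(4) dec by (cases xs) auto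
      show "tc \<gamma>2 (last (xs @ a # c # ys))" using w(5) dec by (cases ys) auto
    qed (use w(2) dec in auto)
    moreover have "length (xs @ a # c # ys) < length w" using dec by simp
    ultimately show False using wmin by force
  qed

  have P3: "\<not> tc \<gamma>1 m" if dec: "w = xs @ m # ys" "xs \<noteq> []" for xs m ys
  proof
    assume tm: "tc \<gamma>1 m"
    have "W (m # ys)"
      unfolding W_def
    proof (intro conjI)
      show "successively adj (m # ys)" using w(3) dec succ_suffix by metis
      show "tc \<gamma>2 (last (m # ys))" using w(5) dec by simp
    qed (use w(2) dec tm in auto)
    moreover have "length (m # ys) < length w" using dec by simp
    ultimately show False using wmin by force
  qed

  have P4: "\<not> tc \<gamma>2 m" if dec: "w = xs @ m # ys" "ys \<noteq> []" for xs m ys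
  proof
    assume tm: "tc \<gamma>2 m"
    have "W (xs @ [m])"
      unfolding W_def
    proof (intro conjI)
      show "successively adj (xs @ [m])" using w(3) dec succ_prefix[of adj "xs @ [m]" ys] by simp
      show "tc \<gamma>1 (hd (xs @ [m]))" using w(4) dec by (cases xs) auto
    qed (use w(2) dec tm in auto)
    moreover have "length (xs @ [m]) < length w" using dec by simp
    ultimately show False using wmin by force
  qed

  have len: "2 \<le> length w"
  proof (rule ccontr)
    assume n2: "\<not> 2 \<le> length w"
    have "length (tl w) = 0" using n2 w(1) by (cases w) (auto simp: Suc_le_eq)
    then obtain e where "w = [e]" using w(1) by (cases w) auto
    then show False using w(2,4,5) nonadj by auto
  qed

  have mid_not: "m \<in> E \<and> \<not> tc \<gamma>1 m \<and> \<not> tc \<gamma>2 m" if m: "m \<in> set (butlast (tl w))" for m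
  proof -
    obtain xs ys where dec: "w = xs @ m # ys" "xs \<noteq> []" "ys \<noteq> []" using mid_dec[OF m] by blast
    have "m \<in> E" using w(2) dec(1) by auto
    then show ?thesis using P3[OF dec(1,2)] P4[OF dec(1,3)] by blast
  qed

  define T where "T = tg w"
  have sndT: "snd ` set T = set (butlast (tl w))"
  proof -
    have "set (map snd T) = set (butlast (tl w))" unfolding T_def tg_snd ..
    then show ?thesis by simp
  qed
  have Tprop: "t \<in> rc_edges E d \<and> d \<in> E" if td: "(t,d) \<in> set T" for t d
  proof -
    obtain xs a c ys where dec: "w = xs @ a # d # c # ys" "t = {{a,d},{d,c}}"
      using tg_dec[OF td[unfolded T_def]] by blast
    have inE: "a \<in> E" "d \<in> E" "c \<in> E" using w(2) dec(1) by auto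
    have ds: "a \<noteq> d" "d \<noteq> c" "a \<noteq> c" using dist dec(1) by auto
    have ad: "a \<inter> d \<noteq> {}" using succ_mid[of adj xs a d "c # ys"] w(3) dec(1) adj_def by simp
    have dc: "d \<inter> c \<noteq> {}" using succ_mid[of adj "xs @ [a]" d c ys] w(3) dec(1) adj_def by simp
    have ac: "a \<inter> c = {}" using P2 dec(1) by blast
    have tL: "t \<in> L2_edges E" using t_L2[OF inE ds ad dc ac] dec(2) by simp
    have "{a,d} \<in> lg_edges E" "{d,c} \<in> lg_edges E" using inE ds ad dc by (auto intro: lg_pair_mem)
    then have "t \<subseteq> rc_verts E d" using dec(2) by (auto simp: rc_verts_def)
    then show ?thesis using tL inE unfolding rc_edges_def by blast
  qed
  have Tdist: "distinct (map snd T)"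
    unfolding T_def tg_snd using dist by (simp add: distinct_butlast distinct_tl)
  have L01: "\<forall>f\<in>L2_edges E. \<Lambda> f \<in> {0,1}" using assms(7) unfolding valid_labeling_def by blast
  obtain Xs where Xs: "set Xs \<subseteq> reduced_cliques E"
      "\<forall>f. (\<forall>d\<in>snd ` set T. f \<notin> rc_edges E d) \<longrightarrow> foldr label_inversion Xs \<Lambda> f = \<Lambda> f"
      "\<forall>(t,d)\<in>set T. foldr label_inversion Xs \<Lambda> t = 1"
    using flips[OF L01, of T] Tprop Tdist by blast
  define L where "L = foldr label_inversion Xs \<Lambda>"
  have keep: "L f = \<Lambda> f" if "\<forall>d\<in>set (butlast (tl w)). f \<notin> rc_edges E d" for f
    using Xs(2) that sndT unfolding L_def by blast

  have inv: "\<gamma> \<in> cycles E L" if g: "\<gamma> \<in> cycles E \<Lambda>" "\<forall>d\<in>set (butlast (tl w)). \<not> tc \<gamma> d" for \<gamma>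
  proof (rule invariance[OF g(1)], intro ballI impI)
    fix f assume f: "f \<in> L2_edges E" "f \<inter> fst \<gamma> \<noteq> {}"
    then obtain q where q: "q \<in> f" "q \<in> fst \<gamma>" by blast
    show "L f = \<Lambda> f"
    proof (rule keep, intro ballI notI)
      fix d assume d: "d \<in> set (butlast (tl w))" "f \<in> rc_edges E d"
      have "q \<in> rc_verts E d" using d(2) q(1) unfolding rc_edges_def by blast
      then have "tc \<gamma> d" using touch[OF g(1) assms(7) _ q(2)] mid_not[OF d(1)] unfolding tc_def by blast
      then show False using g(2) d(1) by blast
    qed
  qed
  have g1L: "\<gamma>1 \<in> cycles E L" using inv[OF assms(8)] mid_not by blast
  have g2L: "\<gamma>2 \<in> cycles E L" using inv[OF assms(9)] mid_not by blast

  obtain e0 e1' rest where wc: "w = e0 # e1' # rest" using len by (cases w; cases "tl w") auto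
  define a where "a = last (butlast w)"
  define b where "b = last w"
  obtain ys where wab: "w = ys @ [a, b]" using last_two[OF len] unfolding a_def b_def by blast
  have e0E: "e0 \<in> E" "e1' \<in> E" using w(2) wc by auto
  have abE: "a \<in> E" "b \<in> E" using w(2) wab by auto
  have "e0 \<noteq> e1'" using dist wc by auto
  moreover have "e0 \<inter> e1' \<noteq> {}" using w(3) wc adj_def by simp
  ultimately have v1L: "{e0, e1'} \<in> lg_edges E" using e0E by (intro lg_pair_mem)
  have "a \<noteq> b" using dist wab by simp
  moreover have "a \<inter> b \<noteq> {}" using succ_mid[of adj ys a b "[]"] w(3) wab adj_def by simp
  ultimately have vkL: "{a, b} \<in> lg_edges E" using abE by (intro lg_pair_mem)
  have v1rc: "{e0, e1'} \<in> rc_verts E e0" using v1L by (simp add: rc_verts_def)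
  have vkrc: "{a, b} \<in> rc_verts E b" using vkL by (simp add: rc_verts_def)
  have e0_nm: "e0 \<notin> set (butlast (tl w))"
  proof
    assume "e0 \<in> set (butlast (tl w))"
    then have "e0 \<in> set (tl w)" by (rule in_set_butlastD)
    moreover have "e0 \<notin> set (tl w)" using dist wc by (metis distinct.simps(2) list.sel(3))
    ultimately show False by blast
  qed
  have b_nm: "b \<notin> set (butlast (tl w))"
  proof
    assume "b \<in> set (butlast (tl w))"
    then obtain xs ys where dec: "w = xs @ b # ys" "ys \<noteq> []" using mid_dec[OF \<open>b \<in> set (butlast (tl w))\<close>] by blast
    have "last w = last ys" using dec by simp
    then have "b \<in> set ys" using dec(2) b_def by simp
    moreover have "b \<notin> set ys" using dist dec(1) by simp
    ultimately show False by blast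
  qed
  obtain g where g: "g \<in> rc_edges E e0" "{e0, e1'} \<in> g" "\<Lambda> g = 1"
    using valid_open[OF assms(7) e0E(1) v1rc] by blast
  obtain h where h: "h \<in> rc_edges E b" "{a, b} \<in> h" "\<Lambda> h = 1"
    using valid_open[OF assms(7) abE(2) vkrc] by blast
  have "L g = \<Lambda> g"
    by (rule keep) (metis g(1) e0_nm rc_unique)
  then have gO: "g \<in> open_edges E L" using g rc_L2 by (simp add: open_edges_def)
  have "L h = \<Lambda> h"
    by (rule keep) (metis h(1) b_nm rc_unique)
  then have hO: "h \<in> open_edges E L" using h rc_L2 by (simp add: open_edges_def)
  have TO: "\<forall>(t,d)\<in>set (tg w). t \<in> open_edges E L"
  proof (intro ballI, clarify)
    fix t d assume "(t,d) \<in> set (tg w)"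
    then have "(t,d) \<in> set T" unfolding T_def .
    then show "t \<in> open_edges E L" using Tprop Xs(3) rc_L2 unfolding L_def open_edges_def by fastforce
  qed
  let ?R = "\<lambda>x y. {x, y} \<in> open_edges E L"
  have chain: "?R\<^sup>*\<^sup>* {e0, e1'} {a, b}"
    using tg_chain[OF TO len] wc unfolding a_def b_def by simp
  define C3 where "C3 = {q. ?R\<^sup>*\<^sup>* {e0, e1'} q}"
  define \<gamma>3 where "\<gamma>3 = (C3, {f\<in>open_edges E L. f \<subseteq> C3})"
  have g3: "\<gamma>3 \<in> cycles E L"
    unfolding cycles_def \<gamma>3_def C3_def using gO g(2) by blast
  obtain x where x: "g = {{e0, e1'}, x}" using open_pair[OF gO g(2)] by blast
  have "?R\<^sup>*\<^sup>* {e0, e1'} x" using gO x by (intro r_into_rtranclp) simp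
  then have "g \<subseteq> C3" using x unfolding C3_def by auto
  then have gs: "g \<in> snd \<gamma>3" using gO unfolding \<gamma>3_def by simp
  obtain y where y: "h = {{a, b}, y}" using open_pair[OF hO h(2)] by blast
  have "?R\<^sup>*\<^sup>* {e0, e1'} y" using chain hO y by (auto intro: rtranclp.rtrancl_into_rtrancl)
  then have "h \<subseteq> C3" using x y chain unfolding C3_def by auto
  then have hs: "h \<in> snd \<gamma>3" using hO unfolding \<gamma>3_def by simp
  have tc1: "tc \<gamma>1 e0" using w(4) wc by simp
  have tc2: "tc \<gamma>2 b" using w(5) b_def by simp
  have n1: "\<gamma>3 \<noteq> \<gamma>1"
  proof
    assume "\<gamma>3 = \<gamma>1"
    then have "tc \<gamma>1 b" using hs h(1) unfolding tc_def by blast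
    then show False using nonadj[OF abE(2)] tc2 by blast
  qed
  have n2: "\<gamma>3 \<noteq> \<gamma>2"
  proof
    assume "\<gamma>3 = \<gamma>2"
    then have "tc \<gamma>2 e0" using gs g(1) unfolding tc_def by blast
    then show False using nonadj[OF e0E(1)] tc1 by blast
  qed
  have ad1: "adjacent_cycles E \<gamma>3 \<gamma>1"
  proof -
    obtain f1 where "f1 \<in> snd \<gamma>1" "f1 \<in> rc_edges E e0" using tc1 unfolding tc_def by blast
    then show ?thesis using adjI[OF n1 e0E(1) gs g(1)] by blast
  qed
  have ad2: "adjacent_cycles E \<gamma>3 \<gamma>2"
  proof -
    obtain f2 where "f2 \<in> snd \<gamma>2" "f2 \<in> rc_edges E b" using tc2 unfolding tc_def by blast
    then show ?thesis using adjI[OF n2 abE(2) hs h(1)] by blast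
  qed
  show ?thesis
    unfolding Let_def
    using Xs(1) g1L g2L g3 ad1 ad2 unfolding L_def by blast
qed

end
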